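(* Let $G=\langle S_k\mid K\rangle$ be a finitely generated semigroup as described in the context, $\mathcal{A}$ a finite alphabet and $X\subseteq\mathcal{A}^G$ a tree shift. If $K$ is primitive, then for every $1\le i\le k$ the limit $\lim_{n\to\infty}\log p^{(s_i)}_n/|\bar{\Delta}^{(s_i)}_n|$ exists and \[\lim_{n\to\infty}\frac{\log p^{(s_i)}_n}{|\bar{\Delta}^{(s_i)}_n|}=\inf_{n\ge0}\max_{1\le j\le k}\frac{\log p^{(s_j)}_n}{|\bar{\Delta}^{(s_j)}_n|}.\]
   Context: Let $K$ be a $k\times k$ matrix with entries in $\{0,1\}$ indexed by $S_k=\{s_1,\dots,s_k\}$, and let $G=\langle S_k\mid K\rangle$ be the semigroup generated by $S_k$ subject to the relations $s_is_j=1_G$ if and only if $K(s_i,s_j)=0$ ($1_G$ the identity). Every $g\in G$ has a unique minimal representation $g=g_1g_2\cdots g_n$ with $g_l\in S_k$ and $K(g_l,g_{l+1})=1$; its length is $|g|=n$ (with $|1_G|=0$). For $g\in G$ and $n\ge0$ the $n$-semiball at $g$ is $\bar{\Delta}^{(g)}_n=\{gh: h\in G,\ |h|\le n,\ |gh|=|g|+|h|\}$. For a finite alphabet $\mathcal{A}$, a pattern is a map $u:H\to\mathcal{A}$ with $H\subset G$ finite; $u$ is accepted by $t\in\mathcal{A}^G$ if there is $g\in G$ with $t_{gh}=u_h$ for all $h\in H$. A tree shift is a subset $X\subseteq\mathcal{A}^G$ consisting of all $t$ that accept no pattern from some fixed set $\mathcal{F}$ of patterns. $p^{(g)}_n$ denotes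 the number of patterns $u\in\mathcal{A}^{\bar{\Delta}^{(g)}_n}$ accepted by some $t\in X$. A nonnegative square matrix is primitive if some power of it has all entries positive. *)

theory Defs
  imports Complex_Main "HOL-Library.FuncSet"
begin

text \<open>Generators s_1..s_k are encoded as 0..<k; K is a k x k matrix with entries in {0,1},
  encoded as a function on indices. Elements of G are represented by their (unique) minimal
  representation: admissible words over {0..<k}; the empty word is the identity.\<close>

definition Gset :: "(nat \<Rightarrow> nat \<Rightarrow> nat) \<Rightarrow> nat \<Rightarrow> nat list set" where
  "Gset K k = {w. set w \<subseteq> {..<k} \<and> (\<forall>l. Suc l < length w \<longrightarrow> K (w ! l) (w ! Suc l) = 1)}"

text \<open>Product in G: append letters of h one by one, cancelling s_i s_j = 1 whenever K(s_i,s_j)=0.\<close>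
fun gmul :: "(nat \<Rightarrow> nat \<Rightarrow> nat) \<Rightarrow> nat list \<Rightarrow> nat list \<Rightarrow> nat list" where
  "gmul K g [] = g"
| "gmul K g (a # h) =
     (if g \<noteq> [] \<and> K (last g) a = 0 then gmul K (butlast g) h else gmul K (g @ [a]) h)"

definition semiball :: "(nat \<Rightarrow> nat \<Rightarrow> nat) \<Rightarrow> nat \<Rightarrow> nat list \<Rightarrow> nat \<Rightarrow> nat list set" where
  "semiball K k g n = {gmul K g h | h. h \<in> Gset K k \<and> length h \<le> n
                          \<and> length (gmul K g h) = length g + length h}"

definition accepts :: "(nat \<Rightarrow> nat \<Rightarrow> nat) \<Rightarrow> nat \<Rightarrow> (nat list \<Rightarrow> 'a) \<Rightarrow> nat list set \<Rightarrow> (nat list \<Rightarrow> 'a) \<Rightarrow> bool" where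
  "accepts K k t H u \<longleftrightarrow> (\<exists>g\<in>Gset K k. \<forall>h\<in>H. t (gmul K g h) = u h)"

definition is_pattern :: "(nat \<Rightarrow> nat \<Rightarrow> nat) \<Rightarrow> nat \<Rightarrow> nat list set \<times> (nat list \<Rightarrow> 'a) \<Rightarrow> bool" where
  "is_pattern K k p \<longleftrightarrow> finite (fst p) \<and> fst p \<subseteq> Gset K k \<and> snd p \<in> fst p \<rightarrow>\<^sub>E UNIV"

definition tree_shift :: "(nat \<Rightarrow> nat \<Rightarrow> nat) \<Rightarrow> nat \<Rightarrow> (nat list set \<times> (nat list \<Rightarrow> 'a)) set
      \<Rightarrow> (nat list \<Rightarrow> 'a) set" where
  "tree_shift K k F = {t \<in> Gset K k \<rightarrow>\<^sub>E UNIV. \<forall>p\<in>F. \<not> accepts K k t (fst p) (snd p)}"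

definition is_tree_shift :: "(nat \<Rightarrow> nat \<Rightarrow> nat) \<Rightarrow> nat \<Rightarrow> (nat list \<Rightarrow> 'a) set \<Rightarrow> bool" where
  "is_tree_shift K k X \<longleftrightarrow> (\<exists>F. (\<forall>p\<in>F. is_pattern K k p) \<and> X = tree_shift K k F)"

definition pcount :: "(nat \<Rightarrow> nat \<Rightarrow> nat) \<Rightarrow> nat \<Rightarrow> (nat list \<Rightarrow> 'a::finite) set \<Rightarrow> nat list \<Rightarrow> nat \<Rightarrow> nat" where
  "pcount K k X g n = card {u \<in> semiball K k g n \<rightarrow>\<^sub>E (UNIV :: 'a set).
                              \<exists>t\<in>X. accepts K k t (semiball K k g n) u}"

fun matpow :: "nat \<Rightarrow> (nat \<Rightarrow> nat \<Rightarrow> nat) \<Rightarrow> nat \<Rightarrow> nat \<Rightarrow> nat \<Rightarrow> nat" where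
  "matpow k M 0 = (\<lambda>i j. if i = j then 1 else 0)"
| "matpow k M (Suc m) = (\<lambda>i j. \<Sum>l<k. matpow k M m i l * M l j)"

definition primitive :: "nat \<Rightarrow> (nat \<Rightarrow> nat \<Rightarrow> nat) \<Rightarrow> bool" where
  "primitive k M \<longleftrightarrow> (\<exists>m\<ge>1. \<forall>i<k. \<forall>j<k. matpow k M m i j > 0)"

end

theory Submission
  imports Defs
begin


lemma Gset_succ: "w \<in> Gset K k \<longleftrightarrow> set w \<subseteq> {..<k} \<and> successively (\<lambda>a b. K a b = 1) w"
proof (induction w)
  case Nil then show ?case by (simp add: Gset_def)
next
  case (Cons a w)
  have "(\<forall>l. Suc l < length (a#w) \<longrightarrow> K ((a#w) ! l) ((a#w) ! Suc l) = 1) \<longleftrightarrow>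
        (w \<noteq> [] \<longrightarrow> K a (hd w) = 1) \<and> (\<forall>l. Suc l < length w \<longrightarrow> K (w ! l) (w ! Suc l) = 1)"
    (is "?L \<longleftrightarrow> ?R")
  proof
    assume L: ?L
    show ?R
    proof
      show "w \<noteq> [] \<longrightarrow> K a (hd w) = 1" using L[rule_format, of 0] by (cases w) auto
      show "\<forall>l. Suc l < length w \<longrightarrow> K (w ! l) (w ! Suc l) = 1" using L by fastforce
    qed
  next
    assume R: ?R
    show ?L
    proof (intro allI impI)
      fix l assume "Suc l < length (a#w)"
      then show "K ((a#w) ! l) ((a#w) ! Suc l) = 1" using R by (cases l; cases w) auto
    qed
  qed
  then show ?case using Cons by (auto simp: Gset_def successively_Cons)
qed

lemma Gset_Cons: "a # w \<in> Gset K k \<longleftrightarrow> a < k \<and> w \<in> Gset K k \<and> (w \<noteq> [] \<longrightarrow> K a (hd w) = 1)"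
  by (auto simp: Gset_succ successively_Cons)

lemma Gset_append: "u @ v \<in> Gset K k \<longleftrightarrow> u \<in> Gset K k \<and> v \<in> Gset K k \<and>
    (u \<noteq> [] \<longrightarrow> v \<noteq> [] \<longrightarrow> K (last u) (hd v) = 1)"
  by (auto simp: Gset_succ successively_append_iff)

lemma Gset_Nil[simp]: "[] \<in> Gset K k" by (simp add: Gset_def)

lemma Gset_butlast: "w \<in> Gset K k \<Longrightarrow> butlast w \<in> Gset K k"
  by (metis Gset_append append_butlast_last_id butlast.simps(1))

lemma Gset_take: "w \<in> Gset K k \<Longrightarrow> take n w \<in> Gset K k"
  by (metis Gset_append append_take_drop_id)

lemma Gset_drop: "w \<in> Gset K k \<Longrightarrow> drop n w \<in> Gset K k"
  by (metis Gset_append append_take_drop_id)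

lemma gmul_append: "gmul K g (h1 @ h2) = gmul K (gmul K g h1) h2"
  by (induction h1 arbitrary: g) auto

lemma gmul_noncancel:
  assumes "h \<in> Gset K k" "g = [] \<or> h = [] \<or> K (last g) (hd h) \<noteq> 0"
  shows "gmul K g h = g @ h"
  using assms
proof (induction h arbitrary: g)
  case Nil then show ?case by simp
next
  case (Cons a h)
  have "gmul K (g @ [a]) h = (g @ [a]) @ h"
    using Cons.prems by (intro Cons.IH) (auto simp: Gset_Cons)
  then show ?case using Cons.prems by auto
qed

lemma gmul_length_le: "length (gmul K g h) \<le> length g + length h"
proof (induction h arbitrary: g)
  case Nil then show ?case by simp
next
  case (Cons a h)
  show ?case using Cons.IH[of "butlast g"] Cons.IH[of "g @ [a]"] by auto
qed

context
  fixes K :: "nat \<Rightarrow> nat \<Rightarrow> nat" and k :: nat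
  assumes K01: "\<forall>i<k. \<forall>j<k. K i j \<in> {0, 1}"
begin

lemma gmul_Gset: "g \<in> Gset K k \<Longrightarrow> h \<in> Gset K k \<Longrightarrow> gmul K g h \<in> Gset K k"
proof (induction h arbitrary: g)
  case Nil then show ?case by simp
next
  case (Cons a h)
  show ?case
  proof (cases "g \<noteq> [] \<and> K (last g) a = 0")
    case True
    then show ?thesis using Cons by (auto simp: Gset_Cons Gset_butlast)
  next
    case False
    have "g @ [a] \<in> Gset K k"
    proof -
      have a: "a < k" using Cons.prems by (auto simp: Gset_Cons)
      have "g \<noteq> [] \<Longrightarrow> last g < k" using Cons.prems(1) by (metis Gset_succ last_in_set lessThan_iff subsetD)
      then have "g \<noteq> [] \<Longrightarrow> K (last g) a = 1" using K01 False a by force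
      then show ?thesis using Cons.prems a by (auto simp: Gset_append Gset_Cons)
    qed
    then show ?thesis using Cons False by (auto simp: Gset_Cons)
  qed
qed

definition SB :: "nat \<Rightarrow> nat \<Rightarrow> nat list set" where
  "SB i n = {w \<in> Gset K k. w \<noteq> [] \<and> hd w = i \<and> length w \<le> Suc n}"

lemma semiball_SB:
  assumes "i < k" shows "semiball K k [i] n = SB i n"
proof
  show "semiball K k [i] n \<subseteq> SB i n"
  proof
    fix w assume "w \<in> semiball K k [i] n"
    then obtain h where h: "h \<in> Gset K k" "length h \<le> n" "length (gmul K [i] h) = 1 + length h"
      and w: "w = gmul K [i] h" by (auto simp: semiball_def)
    have nc: "h = [] \<or> K i (hd h) \<noteq> 0"
    proof (rule ccontr)
      assume "\<not> ?thesis"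
      then obtain a h' where "h = a # h'" "K i a = 0" by (cases h) auto
      then have "gmul K [i] h = gmul K [] h'" by simp
      then have "length (gmul K [i] h) \<le> length h'" using gmul_length_le[of K "[]" h'] by simp
      then show False using h \<open>h = a # h'\<close> by simp
    qed
    then have "w = i # h" using gmul_noncancel[OF h(1), of "[i]"] w by auto
    moreover have "i # h \<in> Gset K k"
    proof -
      have "h \<noteq> [] \<Longrightarrow> hd h < k" using h(1) by (cases h) (auto simp: Gset_Cons)
      then have "h \<noteq> [] \<Longrightarrow> K i (hd h) = 1" using nc K01 assms by force
      then show ?thesis using h(1) assms by (simp add: Gset_Cons)
    qed
    ultimately show "w \<in> SB i n" using h by (simp add: SB_def)
  qed
next
  show "SB i n \<subseteq> semiball K k [i] n"
  proof
    fix w assume "w \<in> SB i n"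
    then obtain h where w: "w = i # h" and hG: "i # h \<in> Gset K k" and len: "length h \<le> n"
      by (cases w) (auto simp: SB_def)
    have h: "h \<in> Gset K k" "h = [] \<or> K i (hd h) \<noteq> 0" using hG by (auto simp: Gset_Cons)
    have "gmul K [i] h = i # h" using gmul_noncancel[OF h(1), of "[i]"] h(2) by auto
    then show "w \<in> semiball K k [i] n" unfolding semiball_def using h len w by force
  qed
qed


definition Lev :: "nat \<Rightarrow> nat \<Rightarrow> nat list set" where
  "Lev i L = {w \<in> Gset K k. w \<noteq> [] \<and> hd w = i \<and> length w = L}"

lemma Gset_sub: "w \<in> Gset K k \<Longrightarrow> set w \<subseteq> {..<k}"
  by (simp add: Gset_succ)

lemma finite_SB: "finite (SB i n)"
proof -
  have "SB i n \<subseteq> {xs. set xs \<subseteq> {..<k} \<and> length xs \<le> Suc n}"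
    by (auto simp: SB_def Gset_succ)
  then show ?thesis using finite_lists_length_le[of "{..<k}" "Suc n"] finite_subset by blast
qed

lemma finite_Lev: "finite (Lev i L)"
proof -
  have "Lev i L \<subseteq> {xs. set xs \<subseteq> {..<k} \<and> length xs = L}"
    by (auto simp: Lev_def Gset_succ)
  then show ?thesis using finite_lists_length_eq[of "{..<k}" L] finite_subset by blast
qed

lemma card_Lev: "card (Lev i L) \<le> k ^ L"
proof -
  have "Lev i L \<subseteq> {xs. set xs \<subseteq> {..<k} \<and> length xs = L}"
    by (auto simp: Lev_def Gset_succ)
  then have "card (Lev i L) \<le> card {xs. set xs \<subseteq> {..<k} \<and> length xs = L}"
    by (intro card_mono) (auto simp: finite_lists_length_eq)
  then show ?thesis by (simp add: card_lists_length_eq)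
qed

lemma Lev_last: "w \<in> Lev i L \<Longrightarrow> last w < k"
  unfolding Lev_def by (metis (mono_tags, lifting) Gset_sub last_in_set lessThan_iff mem_Collect_eq subsetD)

lemma block_mem:
  assumes w: "w \<in> Lev i (Suc (Suc m))" and x: "x \<in> SB (last w) n"
  shows "butlast w @ x \<in> SB i (Suc m + n)" "length (butlast w @ x) > Suc m"
    "take (Suc (Suc m)) (butlast w @ x) = w"
proof -
  have wG: "w \<in> Gset K k" and wne: "w \<noteq> []" and hw: "hd w = i" and lw: "length w = Suc (Suc m)"
    using w by (auto simp: Lev_def)
  have xG: "x \<in> Gset K k" and xne: "x \<noteq> []" and hx: "hd x = last w" and lx: "length x \<le> Suc n"
    using x by (auto simp: SB_def)
  have bw: "butlast w @ [last w] = w" using wne by simp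
  have e: "butlast w @ x = w @ tl x"
    using xne hx bw by (metis append.assoc append_Cons append_Nil list.collapse)
  have "tl x \<in> Gset K k" using xG xne by (metis Gset_drop drop_Suc drop_0)
  moreover have "tl x \<noteq> [] \<longrightarrow> K (last w) (hd (tl x)) = 1"
    using xG xne hx by (metis Gset_Cons list.collapse)
  ultimately have "w @ tl x \<in> Gset K k" using wG by (simp add: Gset_append)
  moreover have "hd (w @ tl x) = i" using wne hw by simp
  moreover have "length (w @ tl x) \<le> Suc (Suc m + n)" using lw lx xne by (cases x) auto
  ultimately show "butlast w @ x \<in> SB i (Suc m + n)" using e wne by (simp add: SB_def)
  show "length (butlast w @ x) > Suc m" using lw xne by simp
  show "take (Suc (Suc m)) (butlast w @ x) = w" using e lw by simp
qed

lemma SB_split: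
  assumes v: "v \<in> SB i (Suc m + n)" and nv: "v \<notin> SB i m"
  shows "take (Suc (Suc m)) v \<in> Lev i (Suc (Suc m))"
    "drop (Suc m) v \<in> SB (last (take (Suc (Suc m)) v)) n"
    "butlast (take (Suc (Suc m)) v) @ drop (Suc m) v = v"
proof -
  have vG: "v \<in> Gset K k" and vne: "v \<noteq> []" and hv: "hd v = i" and lv: "length v \<le> Suc (Suc m + n)"
    using v by (auto simp: SB_def)
  have lv2: "length v > Suc m" using nv vG vne hv by (auto simp: SB_def)
  let ?w = "take (Suc (Suc m)) v"
  have lw: "length ?w = Suc (Suc m)" using lv2 by simp
  have hw: "hd ?w = i" using hv vne by (cases v) auto
  have wne: "?w \<noteq> []" using lw by auto
  then show "?w \<in> Lev i (Suc (Suc m))" using lw vG hw Gset_take unfolding Lev_def by blast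
  have bw: "butlast ?w = take (Suc m) v" using lv2 by (simp add: butlast_take)
  show "butlast ?w @ drop (Suc m) v = v" using bw by simp
  have dne: "drop (Suc m) v \<noteq> []" using lv2 by simp
  have "hd (drop (Suc m) v) = v ! Suc m" using lv2 by (simp add: hd_drop_conv_nth)
  moreover have "last ?w = v ! Suc m"
  proof -
    have l1: "last ?w = ?w ! (length ?w - 1)" by (rule last_conv_nth[OF wne])
    have l2: "last ?w = ?w ! Suc m" by (metis l1 lw diff_Suc_1)
    have "?w ! Suc m = v ! Suc m" by simp
    then show ?thesis using l2 by simp
  qed
  ultimately show "drop (Suc m) v \<in> SB (last ?w) n" using dne vG lv
    by (auto simp: SB_def Gset_drop)
qed

lemma SB_mono_sub: "m \<le> n \<Longrightarrow> SB i m \<subseteq> SB i n"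
  by (auto simp: SB_def)

lemma card_SB_decomp:
  "card (SB i (Suc m + n)) = card (SB i m) + (\<Sum>w\<in>Lev i (Suc (Suc m)). card (SB (last w) n))"
proof -
  let ?L = "Lev i (Suc (Suc m))"
  let ?B = "\<lambda>w. (\<lambda>x. butlast w @ x) ` SB (last w) n"
  have eq: "SB i (Suc m + n) = SB i m \<union> (\<Union>w\<in>?L. ?B w)"
  proof
    show "SB i (Suc m + n) \<subseteq> SB i m \<union> (\<Union>w\<in>?L. ?B w)"
    proof
      fix v assume v: "v \<in> SB i (Suc m + n)"
      show "v \<in> SB i m \<union> (\<Union>w\<in>?L. ?B w)"
      proof (cases "v \<in> SB i m")
        case False
        let ?w = "take (Suc (Suc m)) v"
        have "v = butlast ?w @ drop (Suc m) v" using SB_split(3)[OF v False] by simp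
        then have "v \<in> ?B ?w" using SB_split(2)[OF v False] by blast
        then show ?thesis using SB_split(1)[OF v False] by blast
      qed simp
    qed
    show "SB i m \<union> (\<Union>w\<in>?L. ?B w) \<subseteq> SB i (Suc m + n)"
    proof -
      have "?B w \<subseteq> SB i (Suc m + n)" if "w \<in> ?L" for w
        using block_mem(1)[OF that] by blast
      moreover have "SB i m \<subseteq> SB i (Suc m + n)" by (rule SB_mono_sub) simp
      ultimately show ?thesis by blast
    qed
  qed
  have disj1: "SB i m \<inter> (\<Union>w\<in>?L. ?B w) = {}"
  proof -
    { fix y w x assume a: "w \<in> ?L" "x \<in> SB (last w) n" "y = butlast w @ x" "y \<in> SB i m"
      have False using block_mem(2)[OF a(1,2)] a(3,4) unfolding SB_def by simp }
    then show ?thesis by blast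
  qed
  have disj2: "?B w \<inter> ?B w' = {}" if "w \<in> ?L" "w' \<in> ?L" "w \<noteq> w'" for w w'
  proof -
    { fix y assume "y \<in> ?B w" "y \<in> ?B w'"
      then obtain x x' where x: "x \<in> SB (last w) n" "y = butlast w @ x"
        and x': "x' \<in> SB (last w') n" "y = butlast w' @ x'" by blast
      have "w = take (Suc (Suc m)) y" using block_mem(3)[OF that(1) x(1)] x(2) by simp
      moreover have "w' = take (Suc (Suc m)) y" using block_mem(3)[OF that(2) x'(1)] x'(2) by simp
      ultimately have False using that(3) by simp }
    then show ?thesis by blast
  qed
  have fin: "\<And>w. finite (?B w)" using finite_SB by blast
  have "card (SB i (Suc m + n)) = card (SB i m) + card (\<Union>w\<in>?L. ?B w)"
    unfolding eq using disj1 fin finite_SB finite_Lev by (intro card_Un_disjoint) auto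
  also have "card (\<Union>w\<in>?L. ?B w) = (\<Sum>w\<in>?L. card (?B w))"
    using disj2 fin finite_Lev by (intro card_UN_disjoint) auto
  also have "\<dots> = (\<Sum>w\<in>?L. card (SB (last w) n))"
    by (intro sum.cong refl card_image) (auto simp: inj_on_def)
  finally show ?thesis .
qed

end



definition Pat :: "(nat \<Rightarrow> nat \<Rightarrow> nat) \<Rightarrow> nat \<Rightarrow> (nat list \<Rightarrow> 'a) set \<Rightarrow> nat list set \<Rightarrow> (nat list \<Rightarrow> 'a) set" where
  "Pat K k X H = {u \<in> H \<rightarrow>\<^sub>E (UNIV :: 'a set). \<exists>t\<in>X. accepts K k t H u}"

lemma ln_nat_nonneg: "0 \<le> ln (real (n::nat))"
  by (cases n) auto

lemma ln_prod_bound: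
  fixes a b :: nat and c :: "'b \<Rightarrow> nat"
  assumes "finite S" "a \<le> b * prod c S"
  shows "ln (real a) \<le> ln (real b) + (\<Sum>s\<in>S. ln (real (c s)))"
proof (cases "a = 0")
  case True
  then show ?thesis using ln_nat_nonneg by (simp add: sum_nonneg add_nonneg_nonneg)
next
  case False
  then have bp: "b > 0" and pp: "prod c S > 0" using assms(2) by (auto intro: gr0I)
  then have cp: "\<And>s. s \<in> S \<Longrightarrow> c s \<noteq> 0" using assms(1) by auto
  have x: "real a \<le> real (b * prod c S)" using assms(2) by (simp only: of_nat_le_iff)
  have "ln (real a) \<le> ln (real (b * prod c S))" using False x by (intro ln_mono) auto
  also have "\<dots> = ln (real b * real (prod c S))" by simp
  also have "\<dots> = ln (real b) + ln (real (prod c S))" using bp pp by (intro ln_mult_pos) (simp_all only: of_nat_0_less_iff)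
  also have "real (prod c S) = (\<Prod>s\<in>S. real (c s))" by simp
  also have "ln (\<Prod>s\<in>S. real (c s)) = (\<Sum>s\<in>S. ln (real (c s)))"
    using assms(1) cp by (intro ln_prod) auto
  finally show ?thesis .
qed

lemma lin1: "(L::real) \<le> C + A \<Longrightarrow> C < B \<Longrightarrow> A < Dd \<Longrightarrow> P = H + E \<Longrightarrow> Dd = H + B \<Longrightarrow> B + B = E \<Longrightarrow> L < P"
  by linarith

lemma lin2: "(a::real) \<le> b + s \<Longrightarrow> s = x + y \<Longrightarrow> b \<le> c \<Longrightarrow> x \<le> X \<Longrightarrow> y \<le> Y \<Longrightarrow> a \<le> c + X + Y"
  by linarith

lemma lin3: "(c3::real) < a1 \<Longrightarrow> a1 \<le> a2 \<Longrightarrow> a2 \<le> a3 \<Longrightarrow> a3 = Q / 4 \<Longrightarrow> r \<le> a2 \<Longrightarrow>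
   hdi + hR \<le> hD \<Longrightarrow> 0 < Q \<Longrightarrow> c3 + (hdi - Q) + (hR + r) < hD"
  by linarith

context
  fixes K :: "nat \<Rightarrow> nat \<Rightarrow> nat" and k :: nat and X :: "(nat list \<Rightarrow> 'a::finite) set"
  assumes K01: "\<forall>i<k. \<forall>j<k. K i j \<in> {0, 1}"
begin

lemma finite_Pat: "finite H \<Longrightarrow> finite (Pat K k X H)"
  unfolding Pat_def by (rule finite_subset[OF _ finite_PiE[of H "\<lambda>_. UNIV"]]) auto

lemma pcount_Pat: "i < k \<Longrightarrow> pcount K k X [i] n = card (Pat K k X (SB K k i n))"
  by (simp add: pcount_def Pat_def semiball_SB[OF K01])

lemma Pat_restrict:
  assumes u: "u \<in> Pat K k X H" and p: "p \<in> Gset K k" and B: "\<And>x. x \<in> B \<Longrightarrow> p @ x \<in> H"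
  shows "restrict (\<lambda>x. u (p @ x)) B \<in> Pat K k X B"
proof -
  obtain t g where t: "t \<in> X" and g: "g \<in> Gset K k" and tu: "\<And>h. h \<in> H \<Longrightarrow> t (gmul K g h) = u h"
    using u unfolding Pat_def accepts_def by blast
  have g': "gmul K g p \<in> Gset K k" using gmul_Gset[OF K01 g p] .
  have "\<forall>x\<in>B. t (gmul K (gmul K g p) x) = restrict (\<lambda>x. u (p @ x)) B x"
    using tu B by (simp add: gmul_append[symmetric])
  then have "accepts K k t B (restrict (\<lambda>x. u (p @ x)) B)" using g' unfolding accepts_def by blast
  then show ?thesis using t unfolding Pat_def by auto
qed

lemma card_Pat_decomp:
  "card (Pat K k X (SB K k i (Suc m + n))) \<le> card (Pat K k X (SB K k i m)) *
     (\<Prod>w\<in>Lev K k i (Suc (Suc m)). card (Pat K k X (SB K k (last w) n)))"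
proof -
  let ?H = "SB K k i (Suc m + n)"
  let ?L = "Lev K k i (Suc (Suc m))"
  let ?T = "Pat K k X (SB K k i m) \<times> (\<Pi>\<^sub>E w\<in>?L. Pat K k X (SB K k (last w) n))"
  define f where "f u = (restrict u (SB K k i m), \<lambda>w\<in>?L. restrict (\<lambda>x. u (butlast w @ x)) (SB K k (last w) n))" for u :: "nat list \<Rightarrow> 'a"
  have sub: "SB K k i m \<subseteq> ?H" by (rule SB_mono_sub[OF K01]) simp
  have img: "f ` Pat K k X ?H \<subseteq> ?T"
  proof
    fix y assume "y \<in> f ` Pat K k X ?H"
    then obtain u where u: "u \<in> Pat K k X ?H" and y: "y = f u" by blast
    have "restrict (\<lambda>x. u ([] @ x)) (SB K k i m) \<in> Pat K k X (SB K k i m)"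
      using sub by (intro Pat_restrict[OF u]) auto
    moreover have "restrict (\<lambda>x. u (butlast w @ x)) (SB K k (last w) n) \<in> Pat K k X (SB K k (last w) n)"
      if w: "w \<in> ?L" for w
    proof (rule Pat_restrict[OF u])
      show "butlast w \<in> Gset K k" using w by (auto simp: Lev_def[OF K01] Gset_butlast)
      show "\<And>x. x \<in> SB K k (last w) n \<Longrightarrow> butlast w @ x \<in> ?H" using block_mem(1)[OF K01 w] by blast
    qed
    ultimately show "y \<in> ?T" unfolding y f_def by auto
  qed
  have inj: "inj_on f (Pat K k X ?H)"
  proof (rule inj_onI)
    fix u u' assume u: "u \<in> Pat K k X ?H" and u': "u' \<in> Pat K k X ?H" and e: "f u = f u'"
    have e1: "restrict u (SB K k i m) = restrict u' (SB K k i m)" using e unfolding f_def by simp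
    have e2: "\<And>w. w \<in> ?L \<Longrightarrow> restrict (\<lambda>x. u (butlast w @ x)) (SB K k (last w) n)
                        = restrict (\<lambda>x. u' (butlast w @ x)) (SB K k (last w) n)"
    proof -
      fix w assume w: "w \<in> ?L"
      have "(\<lambda>w\<in>?L. restrict (\<lambda>x. u (butlast w @ x)) (SB K k (last w) n)) w =
            (\<lambda>w\<in>?L. restrict (\<lambda>x. u' (butlast w @ x)) (SB K k (last w) n)) w"
        using e unfolding f_def by simp
      then show "restrict (\<lambda>x. u (butlast w @ x)) (SB K k (last w) n)
                        = restrict (\<lambda>x. u' (butlast w @ x)) (SB K k (last w) n)" using w by simp
    qed
    show "u = u'"
    proof
      fix v
      show "u v = u' v"
      proof (cases "v \<in> ?H")
        case False
        have "u \<in> ?H \<rightarrow>\<^sub>E UNIV" "u' \<in> ?H \<rightarrow>\<^sub>E UNIV" using u u' unfolding Pat_def by auto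
        then have "u v = undefined" "u' v = undefined" using False by (auto intro: PiE_arb)
        then show ?thesis by simp
      next
        case vH: True
        show ?thesis
        proof (cases "v \<in> SB K k i m")
          case True
          have "restrict u (SB K k i m) v = restrict u' (SB K k i m) v"
            using e1 by (rule arg_cong[where f = "\<lambda>F. F v"])
          then show ?thesis using True by (simp only: restrict_apply')
        next
          case False
          let ?w = "take (Suc (Suc m)) v"
          have w: "?w \<in> ?L" by (rule SB_split(1)[OF K01 vH False])
          have x: "drop (Suc m) v \<in> SB K k (last ?w) n" by (rule SB_split(2)[OF K01 vH False])
          have vv: "butlast ?w @ drop (Suc m) v = v" by (rule SB_split(3)[OF K01 vH False])
          have "restrict (\<lambda>x. u (butlast ?w @ x)) (SB K k (last ?w) n) (drop (Suc m) v)
              = restrict (\<lambda>x. u' (butlast ?w @ x)) (SB K k (last ?w) n) (drop (Suc m) v)"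
            using e2[OF w] by (rule arg_cong[where f = "\<lambda>F. F (drop (Suc m) v)"])
          then have "u (butlast ?w @ drop (Suc m) v) = u' (butlast ?w @ drop (Suc m) v)"
            using x by (simp only: restrict_apply')
          then show ?thesis unfolding vv .
        qed
      qed
    qed
  qed
  have finT: "finite ?T"
  proof -
    have "finite (Pat K k X (SB K k i m))" by (rule finite_Pat[OF finite_SB[OF K01]])
    moreover have "finite (\<Pi>\<^sub>E w\<in>?L. Pat K k X (SB K k (last w) n))"
      by (rule finite_PiE[OF finite_Lev[OF K01]]) (rule finite_Pat[OF finite_SB[OF K01]])
    ultimately show ?thesis by blast
  qed
  have "card (Pat K k X ?H) \<le> card ?T" using card_inj_on_le[OF inj img finT] .
  also have "card ?T = card (Pat K k X (SB K k i m)) *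
     (\<Prod>w\<in>?L. card (Pat K k X (SB K k (last w) n)))"
    using finite_Lev[OF K01] by (simp add: card_cartesian_product card_PiE)
  finally show ?thesis .
qed

definition Lp where "Lp i n = ln (real (card (Pat K k X (SB K k i n))))"
definition dd where "dd i n = real (card (SB K k i n))"

lemma Lp_nonneg: "0 \<le> Lp i n" unfolding Lp_def by (rule ln_nat_nonneg)

lemma Lp_decomp: "Lp i (Suc m + n) \<le> Lp i m + (\<Sum>w\<in>Lev K k i (Suc (Suc m)). Lp (last w) n)"
  unfolding Lp_def by (rule ln_prod_bound[OF finite_Lev[OF K01] card_Pat_decomp])

lemma dd_decomp: "dd i (Suc m + n) = dd i m + (\<Sum>w\<in>Lev K k i (Suc (Suc m)). dd (last w) n)"
  unfolding dd_def by (subst card_SB_decomp[OF K01]) simp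

lemma dd_pos: "i < k \<Longrightarrow> 1 \<le> dd i n"
proof -
  assume i: "i < k"
  have "[i] \<in> SB K k i n" using i by (simp add: SB_def[OF K01] Gset_Cons)
  then have "card (SB K k i n) \<ge> 1" using finite_SB[OF K01] by (metis One_nat_def Suc_leI card_gt_0_iff empty_iff)
  then show ?thesis unfolding dd_def by simp
qed


lemma path_exists:
  "matpow k K m i j > 0 \<Longrightarrow> i < k \<Longrightarrow> j < k \<Longrightarrow> \<exists>w\<in>Lev K k i (Suc m). last w = j"
proof (induction m arbitrary: j)
  case 0
  then have "i = j" by (simp split: if_splits)
  moreover have "[i] \<in> Lev K k i (Suc 0)" using 0 by (simp add: Lev_def[OF K01] Gset_Cons)
  ultimately show ?case by force
next
  case (Suc m)
  have "(\<Sum>l<k. matpow k K m i l * K l j) > 0" using Suc.prems(1) by simp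
  then obtain l where l: "l < k" "matpow k K m i l * K l j \<noteq> 0"
    by (metis (no_types, lifting) lessThan_iff less_irrefl sum.neutral)
  have "K l j \<in> {0, 1}" using K01 l(1) Suc.prems(3) by blast
  then have ml: "matpow k K m i l > 0" and Klj: "K l j = 1" using l(2) by auto
  obtain w where w: "w \<in> Lev K k i (Suc m)" "last w = l" using Suc.IH[OF ml Suc.prems(2) l(1)] by blast
  have wG: "w \<in> Gset K k" and wne: "w \<noteq> []" and hw: "hd w = i" and lw: "length w = Suc m"
    using w(1) by (auto simp: Lev_def[OF K01])
  have "w @ [j] \<in> Gset K k" using wG wne Klj w(2) Suc.prems(3) by (simp add: Gset_append Gset_Cons)
  then have "w @ [j] \<in> Lev K k i (Suc (Suc m))" using wne hw lw by (simp add: Lev_def[OF K01])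
  then show ?case by force
qed

context
  assumes prim: "primitive k K" and kpos: "0 < k"
begin

lemma succ_exists: "x < k \<Longrightarrow> \<exists>y<k. K x y = 1"
proof -
  assume x: "x < k"
  obtain m0 where m0: "m0 \<ge> 1" "\<forall>i<k. \<forall>j<k. matpow k K m0 i j > 0" using prim unfolding primitive_def by blast
  have "matpow k K m0 x x > 0" using m0(2) x by blast
  then obtain w where w: "w \<in> Lev K k x (Suc m0)" using path_exists[OF _ x x] by blast
  have wG: "w \<in> Gset K k" and wne: "w \<noteq> []" and hw: "hd w = x" and lw: "length w = Suc m0"
    using w by (auto simp: Lev_def[OF K01])
  obtain a t where w1: "w = a # t" using wne by (cases w) auto
  have "t \<noteq> []" using lw m0(1) w1 by auto
  then obtain y rest where t1: "t = y # rest" by (cases t) auto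
  have ax: "a = x" using hw w1 by simp
  have "x # y # rest \<in> Gset K k" using wG w1 t1 ax by simp
  then have "y < k" "K x y = 1" by (simp_all add: Gset_Cons)
  then show ?thesis by blast
qed

lemma Lev_ne: "i < k \<Longrightarrow> \<exists>w. w \<in> Lev K k i (Suc L)"
proof (induction L)
  case 0
  have "[i] \<in> Lev K k i (Suc 0)" using 0 by (simp add: Lev_def[OF K01] Gset_Cons)
  then show ?case by blast
next
  case (Suc L)
  then obtain w where w: "w \<in> Lev K k i (Suc L)" by blast
  have wG: "w \<in> Gset K k" and wne: "w \<noteq> []" and hw: "hd w = i" and lw: "length w = Suc L"
    using w by (auto simp: Lev_def[OF K01])
  obtain y where y: "y < k" "K (last w) y = 1" using succ_exists Lev_last[OF K01 w] by blast
  have "w @ [y] \<in> Gset K k" using wG wne y by (simp add: Gset_append Gset_Cons)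
  then have "w @ [y] \<in> Lev K k i (Suc (Suc L))" using wne hw lw by (simp add: Lev_def[OF K01])
  then show ?case by blast
qed

lemma dd_ge: "i < k \<Longrightarrow> real n + 1 \<le> dd i n"
proof (induction n)
  case 0
  then show ?case using dd_pos by simp
next
  case (Suc n)
  obtain w where w: "w \<in> Lev K k i (Suc (Suc n))" using Lev_ne[OF Suc.prems] by blast
  have "dd (last w) 0 \<le> (\<Sum>w\<in>Lev K k i (Suc (Suc n)). dd (last w) 0)"
    by (rule member_le_sum[OF w]) (auto simp: dd_def finite_Lev[OF K01])
  moreover have "1 \<le> dd (last w) 0" using dd_pos Lev_last[OF K01 w] by blast
  moreover have "dd i (Suc n + 0) = dd i n + (\<Sum>w\<in>Lev K k i (Suc (Suc n)). dd (last w) 0)"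
    by (rule dd_decomp)
  moreover have "Suc n + 0 = Suc n" by (rule add_0_right)
  moreover have "real (Suc n) = real n + 1" by simp
  ultimately show ?case using Suc.IH[OF Suc.prems] by (simp only:)
qed

definition av where "av j n = Lp j n / dd j n"
definition MM where "MM n = Max ((\<lambda>j. av j n) ` {..<k})"
definition hh where "hh = (INF n. MM n)"

lemma av_nonneg: "j < k \<Longrightarrow> 0 \<le> av j n"
  unfolding av_def using Lp_nonneg dd_pos by (meson divide_nonneg_pos less_le_trans zero_less_one)

lemma av_le_M: "j < k \<Longrightarrow> av j n \<le> MM n"
  unfolding MM_def by (rule Max_ge) auto

lemma M_nonneg: "0 \<le> MM n"
  using av_nonneg[OF kpos, of n] av_le_M[OF kpos, of n] by linarith

lemma bddM: "bdd_below (range MM)"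
  using M_nonneg by (intro bdd_belowI[of _ 0]) auto

lemma h_le: "hh \<le> MM n"
  unfolding hh_def by (rule cINF_lower[OF bddM]) simp

lemma h_nonneg: "0 \<le> hh"
  unfolding hh_def by (rule cINF_greatest) (auto simp: M_nonneg)

lemma Lp_le_av: "j < k \<Longrightarrow> Lp j n = av j n * dd j n"
  unfolding av_def using dd_pos[of j n] by simp

lemma upper_bound:
  "i < k \<Longrightarrow> Lp i N \<le> (\<Sum>i<k. \<Sum>r\<le>T. Lp i r) + MM T * dd i N"
proof (induction N arbitrary: i rule: less_induct)
  case (less N)
  let ?C = "(\<Sum>i<k. \<Sum>r\<le>T. Lp i r)"
  show ?case
  proof (cases "N \<le> T")
    case True
    have "Lp i N \<le> (\<Sum>r\<le>T. Lp i r)"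
      by (rule member_le_sum) (use True Lp_nonneg in auto)
    also have "\<dots> \<le> ?C"
      by (rule member_le_sum[of i "{..<k}" "\<lambda>i. \<Sum>r\<le>T. Lp i r"]) (use less.prems Lp_nonneg in \<open>auto intro: sum_nonneg\<close>)
    moreover have "0 \<le> MM T * dd i N" using M_nonneg[of T] dd_pos[OF less.prems, of N] by simp
    ultimately show ?thesis by linarith
  next
    case False
    define m where "m = N - Suc T"
    have N: "N = Suc m + T" using False unfolding m_def by simp
    let ?L = "Lev K k i (Suc (Suc m))"
    have IH: "Lp i m \<le> ?C + MM T * dd i m" using less.IH[of m i] less.prems N by simp
    have s: "(\<Sum>w\<in>?L. Lp (last w) T) \<le> (\<Sum>w\<in>?L. MM T * dd (last w) T)"
    proof (rule sum_mono)
      fix w assume w: "w \<in> ?L"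
      have j: "last w < k" using Lev_last[OF K01 w] .
      show "Lp (last w) T \<le> MM T * dd (last w) T"
        using Lp_le_av[OF j, of T] av_le_M[OF j, of T] dd_pos[OF j, of T]
        by (simp add: mult_right_mono)
    qed
    have "Lp i (Suc m + T) \<le> Lp i m + (\<Sum>w\<in>?L. Lp (last w) T)" by (rule Lp_decomp)
    also have "\<dots> \<le> ?C + MM T * dd i m + (\<Sum>w\<in>?L. MM T * dd (last w) T)" using IH s by linarith
    also have "\<dots> = ?C + MM T * (dd i m + (\<Sum>w\<in>?L. dd (last w) T))"
      by (simp add: sum_distrib_left algebra_simps)
    also have "dd i m + (\<Sum>w\<in>?L. dd (last w) T) = dd i (Suc m + T)" by (rule dd_decomp[symmetric])
    finally show ?thesis using N by simp
  qed
qed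

lemma upper_ev: "\<epsilon> > 0 \<Longrightarrow> \<exists>N0. \<forall>N\<ge>N0. \<forall>l<k. av l N < hh + \<epsilon>"
proof -
  assume e: "\<epsilon> > 0"
  have "(INF n. MM n) < hh + \<epsilon> / 2" using e unfolding hh_def by simp
  then obtain T where T: "MM T < hh + \<epsilon> / 2" using cINF_less_iff[OF _ bddM] by auto
  define C where "C = (\<Sum>i<k. \<Sum>r\<le>T. Lp i r)"
  obtain N0 :: nat where N0: "2 * C / \<epsilon> < real N0" using reals_Archimedean2 by blast
  have "av l N < hh + \<epsilon>" if N: "N \<ge> N0" and l: "l < k" for N l
  proof -
    have b: "Lp l N \<le> C + MM T * dd l N" using upper_bound[OF l] unfolding C_def .
    have d1: "real N + 1 \<le> dd l N" using dd_ge[OF l] .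
    have NN: "real N0 \<le> real N" using N by simp
    have "2 * C / \<epsilon> < real N + 1" using N0 NN by linarith
    then have "2 * C < (real N + 1) * \<epsilon>" using e by (simp add: divide_less_eq)
    moreover have "(real N + 1) * \<epsilon> \<le> dd l N * \<epsilon>" by (rule mult_right_mono[OF d1]) (use e in simp)
    ultimately have c0: "2 * C < dd l N * \<epsilon>" by (rule less_le_trans)
    have c4: "\<epsilon> / 2 * dd l N = (dd l N * \<epsilon>) / 2" by simp
    have c: "C < \<epsilon> / 2 * dd l N" unfolding c4 using c0 by linarith
    have m: "MM T * dd l N < (hh + \<epsilon> / 2) * dd l N" using T dd_pos[OF l, of N] by simp
    have r1: "(hh + \<epsilon>) * dd l N = hh * dd l N + \<epsilon> * dd l N" by (rule distrib_right)
    have r2: "(hh + \<epsilon> / 2) * dd l N = hh * dd l N + \<epsilon> / 2 * dd l N" by (rule distrib_right)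
    have r3: "\<epsilon> / 2 * dd l N + \<epsilon> / 2 * dd l N = \<epsilon> * dd l N"
      by (simp only: distrib_right[symmetric] field_sum_of_halves)
    have "Lp l N < (hh + \<epsilon>) * dd l N" by (rule lin1[OF b c m r1 r2 r3])
    moreover have "0 < dd l N" using dd_pos[OF l, of N] by simp
    ultimately show ?thesis unfolding av_def by (simp only: pos_divide_less_eq)
  qed
  then show ?thesis by blast
qed


lemma dd_nonneg: "0 \<le> dd i n" unfolding dd_def by simp

lemma ratio_bound:
  assumes m0: "\<forall>i<k. \<forall>j<k. matpow k K (Suc m') i j > 0" and i: "i < k"
  shows "\<exists>C2>0. \<forall>N\<ge>Suc m'. \<forall>j<k. dd j (Suc m' + N) \<le> C2 * dd i N"
proof -
  define c4 where "c4 = (\<Sum>x<k. dd x m')"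
  define q where "q = real (k ^ Suc (Suc m'))"
  have c4: "\<And>x. x < k \<Longrightarrow> dd x m' \<le> c4"
    unfolding c4_def by (rule member_le_sum) (auto simp: dd_nonneg)
  have c4n: "0 \<le> c4" unfolding c4_def by (simp add: sum_nonneg dd_nonneg)
  have "1 \<le> k ^ Suc (Suc m')" using kpos by (simp add: one_le_power Suc_leI)
  then have q1: "1 \<le> q" unfolding q_def by (metis of_nat_1 of_nat_le_iff)
  have G2: "dd y n \<le> dd i (Suc m' + n)" if y: "y < k" for y n
  proof -
    have "matpow k K (Suc m') i y > 0" using m0 i y by blast
    then obtain w where w: "w \<in> Lev K k i (Suc (Suc m'))" "last w = y" using path_exists[OF _ i y] by blast
    have "dd (last w) n \<le> (\<Sum>w\<in>Lev K k i (Suc (Suc m')). dd (last w) n)"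
      by (rule member_le_sum[OF w(1)]) (auto simp: dd_nonneg finite_Lev[OF K01])
    then have "dd y n \<le> (\<Sum>w\<in>Lev K k i (Suc (Suc m')). dd (last w) n)" by (simp only: w(2))
    then show ?thesis using dd_decomp[of i m' n] dd_nonneg[of i m'] by linarith
  qed
  have G1: "dd x (Suc m' + n) \<le> c4 + q * B" if x: "x < k" and B: "\<And>y. y < k \<Longrightarrow> dd y n \<le> B" for x n B
  proof -
    have B0: "0 \<le> B" using B[OF kpos] dd_nonneg[of 0 n] by linarith
    have "(\<Sum>w\<in>Lev K k x (Suc (Suc m')). dd (last w) n) \<le> real (card (Lev K k x (Suc (Suc m')))) * B"
      by (rule sum_bounded_above) (use B Lev_last[OF K01] in blast)
    also have "\<dots> \<le> q * B" unfolding q_def using card_Lev[OF K01, of x "Suc (Suc m')"] B0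
      by (intro mult_right_mono) (simp_all only: of_nat_le_iff)
    finally show ?thesis using dd_decomp[of x m' n] c4[OF x] by linarith
  qed
  have G3: "dd x N \<le> (c4 + q) * dd i N" if x: "x < k" and N: "N \<ge> Suc m'" for x N
  proof -
    define n where "n = N - Suc m'"
    have Nn: "N = Suc m' + n" using N unfolding n_def by simp
    have "dd x (Suc m' + n) \<le> c4 + q * dd i (Suc m' + n)"
      by (rule G1[OF x]) (rule G2)
    moreover have "c4 \<le> c4 * dd i N" using c4n dd_pos[OF i, of N] by (simp add: mult_le_cancel_left1)
    moreover have "(c4 + q) * dd i N = c4 * dd i N + q * dd i N" by (rule distrib_right)
    ultimately show ?thesis unfolding Nn[symmetric] by linarith
  qed
  define C2 where "C2 = c4 + q * (c4 + q)"
  have C2p: "C2 > 0" unfolding C2_def using c4n q1 by (simp add: add_nonneg_pos)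
  have "dd j (Suc m' + N) \<le> C2 * dd i N" if j: "j < k" and N: "N \<ge> Suc m'" for j N
  proof -
    have "dd j (Suc m' + N) \<le> c4 + q * ((c4 + q) * dd i N)"
      by (rule G1[OF j]) (rule G3[OF _ N])
    moreover have "c4 \<le> c4 * dd i N" using c4n dd_pos[OF i, of N] by (simp add: mult_le_cancel_left1)
    moreover have "(c4 + q * (c4 + q)) * dd i N = c4 * dd i N + q * ((c4 + q) * dd i N)"
      by (simp only: distrib_right mult.assoc)
    ultimately show ?thesis unfolding C2_def by linarith
  qed
  then show ?thesis using C2p by blast
qed

lemma lower_ev:
  assumes e: "\<epsilon> > 0" and i: "i < k"
  shows "\<exists>N2. \<forall>N\<ge>N2. hh - \<epsilon> < av i N"
proof (rule ccontr)
  assume "\<not> ?thesis"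
  then have bad: "\<And>N2. \<exists>N\<ge>N2. av i N \<le> hh - \<epsilon>" by (meson not_less)
  obtain m0 where m0: "m0 \<ge> 1" "\<forall>i<k. \<forall>j<k. matpow k K m0 i j > 0"
    using prim unfolding primitive_def by blast
  define m' where "m' = m0 - 1"
  have m0': "m0 = Suc m'" using m0(1) unfolding m'_def by simp
  have mp: "\<forall>i<k. \<forall>j<k. matpow k K (Suc m') i j > 0" using m0(2) m0' by simp
  obtain C2 where C2: "C2 > 0" "\<forall>N\<ge>Suc m'. \<forall>j<k. dd j (Suc m' + N) \<le> C2 * dd i N"
    using ratio_bound[OF mp i] by blast
  define \<eta> where "\<eta> = \<epsilon> / (4 * C2)"
  have eta: "\<eta> > 0" unfolding \<eta>_def using e C2(1) by simp
  have etaC: "\<eta> * C2 = \<epsilon> / 4" unfolding \<eta>_def using C2(1) by simp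
  obtain N1 where N1: "\<forall>N\<ge>N1. \<forall>l<k. av l N < hh + \<eta>" using upper_ev[OF eta] by blast
  define c3 where "c3 = (\<Sum>j<k. Lp j m')"
  obtain N3 :: nat where N3: "c3 / \<eta> < real N3" using reals_Archimedean2 by blast
  obtain N where N: "N \<ge> max N1 (max (Suc m') N3)" "av i N \<le> hh - \<epsilon>" using bad[of "max N1 (max (Suc m') N3)"] by blast
  have allj: "av j (Suc m' + N) < hh" if j: "j < k" for j
  proof -
    let ?L = "Lev K k j (Suc (Suc m'))"
    have "matpow k K (Suc m') j i > 0" using mp i j by blast
    then obtain ws where ws: "ws \<in> ?L" "last ws = i" using path_exists[OF _ j i] by blast
    have finL: "finite ?L" by (rule finite_Lev[OF K01])
    define R where "R = (\<Sum>w\<in>?L - {ws}. dd (last w) N)"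
    define D where "D = dd j (Suc m' + N)"
    define di where "di = dd i N"
    have di1: "1 \<le> di" unfolding di_def using dd_pos[OF i] .
    have R0: "0 \<le> R" unfolding R_def by (simp add: sum_nonneg dd_nonneg)
    have rd: "(\<Sum>w\<in>?L. dd (last w) N) = dd i N + (\<Sum>w\<in>?L - {ws}. dd (last w) N)"
      using sum.remove[OF finL ws(1), of "\<lambda>w. dd (last w) N"] unfolding ws(2) .
    have Dsplit: "D = dd j m' + di + R"
      unfolding D_def di_def R_def dd_decomp[of j m' N] rd by (simp only: add.assoc)
    have "N \<ge> Suc m'" using N(1) by simp
    then have DC: "D \<le> C2 * di" unfolding D_def di_def using C2(2) j by blast
    have "real N + 1 \<le> real (Suc m' + N) + 1" by simp
    then have Dge: "real N + 1 \<le> D" unfolding D_def using dd_ge[OF j, of "Suc m' + N"] by (rule order_trans)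
    have Lsplit: "(\<Sum>w\<in>?L. Lp (last w) N) = Lp i N + (\<Sum>w\<in>?L - {ws}. Lp (last w) N)"
      using sum.remove[OF finL ws(1), of "\<lambda>w. Lp (last w) N"] unfolding ws(2) .
    have "av i N * dd i N \<le> (hh - \<epsilon>) * dd i N" by (rule mult_right_mono[OF N(2) dd_nonneg])
    then have Li: "Lp i N \<le> (hh - \<epsilon>) * di" unfolding di_def Lp_le_av[OF i, of N] .
    have Lrest: "(\<Sum>w\<in>?L - {ws}. Lp (last w) N) \<le> (hh + \<eta>) * R"
    proof -
      have "(\<Sum>w\<in>?L - {ws}. Lp (last w) N) \<le> (\<Sum>w\<in>?L - {ws}. (hh + \<eta>) * dd (last w) N)"
      proof (rule sum_mono)
        fix w assume w: "w \<in> ?L - {ws}"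
        have l: "last w < k" using Lev_last[OF K01] w by blast
        have "N \<ge> N1" using N(1) by simp
        then have "av (last w) N < hh + \<eta>" using N1 l by blast
        then have "av (last w) N \<le> hh + \<eta>" by (rule less_imp_le)
        then have "av (last w) N * dd (last w) N \<le> (hh + \<eta>) * dd (last w) N"
          by (rule mult_right_mono[OF _ dd_nonneg])
        then show "Lp (last w) N \<le> (hh + \<eta>) * dd (last w) N" unfolding Lp_le_av[OF l, of N] .
      qed
      then show ?thesis unfolding R_def sum_distrib_left .
    qed
    have Lj: "Lp j m' \<le> c3" unfolding c3_def by (rule member_le_sum) (use j Lp_nonneg in auto)
    have c3N: "c3 < \<eta> * real N"
    proof -
      have "N3 \<le> N" using N(1) by simp
      then have "real N3 \<le> real N" by simp
      then have "c3 / \<eta> < real N" using N3 by linarith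
      then show ?thesis using eta by (simp add: divide_less_eq mult.commute)
    qed
    have t1: "\<eta> * real N \<le> \<eta> * D" using Dge eta by (intro mult_left_mono) auto
    have t2: "\<eta> * D \<le> \<eta> * (C2 * di)" using DC eta by (intro mult_left_mono) auto
    have t3: "\<eta> * (C2 * di) = \<epsilon> / 4 * di" using etaC by (simp add: mult.assoc[symmetric])
    have t4: "\<eta> * R \<le> \<eta> * D" using Dsplit dd_nonneg[of j m'] di1 eta by (intro mult_left_mono) auto
    have t5: "hh * (di + R) \<le> hh * D" using Dsplit dd_nonneg[of j m'] h_nonneg by (intro mult_left_mono) auto
    have "0 < di" using di1 by linarith
    with e have t6: "0 < \<epsilon> * di" by (rule mult_pos_pos)
    have s1: "Lp j (Suc m' + N) \<le> c3 + (hh - \<epsilon>) * di + (hh + \<eta>) * R"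
      by (rule lin2[OF Lp_decomp[of j m' N] Lsplit Lj Li Lrest])
    have e1: "(hh - \<epsilon>) * di = hh * di - \<epsilon> * di" by (rule left_diff_distrib)
    have e2: "(hh + \<eta>) * R = hh * R + \<eta> * R" by (rule distrib_right)
    have e3: "hh * (di + R) = hh * di + hh * R" by (rule distrib_left)
    have t3': "\<eta> * (C2 * di) = (\<epsilon> * di) / 4" using etaC by (simp add: mult.assoc[symmetric])
    have t5': "hh * di + hh * R \<le> hh * D" using t5 unfolding e3 .
    have s2: "c3 + (hh * di - \<epsilon> * di) + (hh * R + \<eta> * R) < hh * D"
      by (rule lin3[OF c3N t1 t2 t3' t4 t5' t6])
    have "Lp j (Suc m' + N) < hh * D" using s1 s2 unfolding e1 e2 by (rule le_less_trans)
    moreover have "0 < D" using Dge by linarith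
    ultimately show ?thesis unfolding av_def D_def by (simp only: pos_divide_less_eq)
  qed
  have fin: "finite ((\<lambda>j. av j (Suc m' + N)) ` {..<k})" by simp
  have ne: "(\<lambda>j. av j (Suc m' + N)) ` {..<k} \<noteq> {}" using kpos by auto
  have "MM (Suc m' + N) < hh" unfolding MM_def Max_less_iff[OF fin ne] using allj by blast
  then show False using h_le[of "Suc m' + N"] by linarith
qed

lemma main_conv: assumes i: "i < k" shows "(\<lambda>n. av i n) \<longlonglongrightarrow> hh"
proof (rule LIMSEQ_I)
  fix r :: real assume r: "0 < r"
  obtain N1 where N1: "\<forall>N\<ge>N1. \<forall>l<k. av l N < hh + r" using upper_ev[OF r] by blast
  obtain N2 where N2: "\<forall>N\<ge>N2. hh - r < av i N" using lower_ev[OF r i] by blast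
  have "norm (av i N - hh) < r" if "N \<ge> max N1 N2" for N
  proof -
    have a: "av i N < hh + r" using N1 that i by simp
    have b: "hh - r < av i N" using N2 that by simp
    show ?thesis using a b by (simp add: abs_less_iff)
  qed
  then show "\<exists>no. \<forall>n\<ge>no. norm (av i n - hh) < r" by blast
qed


lemma final_form:
  assumes i: "i < k"
  shows "(\<lambda>n. ln (real (pcount K k X [i] n)) / real (card (semiball K k [i] n)))
           \<longlonglongrightarrow> (INF n. Max ((\<lambda>j. ln (real (pcount K k X [j] n)) / real (card (semiball K k [j] n))) ` {..<k}))"
proof -
  have e: "ln (real (pcount K k X [j] n)) / real (card (semiball K k [j] n)) = av j n" if j: "j < k" for j n
    unfolding av_def Lp_def dd_def using pcount_Pat[OF j] semiball_SB[OF K01 j] by simp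
  have f1: "(\<lambda>n. ln (real (pcount K k X [i] n)) / real (card (semiball K k [i] n))) = (\<lambda>n. av i n)"
    using e[OF i] by simp
  have f2: "(\<lambda>n. Max ((\<lambda>j. ln (real (pcount K k X [j] n)) / real (card (semiball K k [j] n))) ` {..<k})) = MM"
  proof
    fix n
    have "(\<lambda>j. ln (real (pcount K k X [j] n)) / real (card (semiball K k [j] n))) ` {..<k} = (\<lambda>j. av j n) ` {..<k}"
      using e by (intro image_cong) auto
    then show "Max ((\<lambda>j. ln (real (pcount K k X [j] n)) / real (card (semiball K k [j] n))) ` {..<k}) = MM n"
      unfolding MM_def by simp
  qed
  show ?thesis unfolding f1 f2 using main_conv[OF i] unfolding hh_def .
qed

end

end

theorem theorem3p6:
  fixes k :: nat and K :: "nat \<Rightarrow> nat \<Rightarrow> nat" and X :: "(nat list \<Rightarrow> 'a::finite) set"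
  assumes "\<forall>i<k. \<forall>j<k. K i j \<in> {0, 1}"
    and "is_tree_shift K k X"
    and "primitive k K"
    and "i < k"
  shows "(\<lambda>n. ln (real (pcount K k X [i] n)) / real (card (semiball K k [i] n)))
           \<longlonglongrightarrow> (INF n. Max ((\<lambda>j. ln (real (pcount K k X [j] n)) / real (card (semiball K k [j] n))) ` {..<k}))"
proof -
  have kpos: "0 < k" using assms(4) by simp
  show ?thesis by (rule final_form[OF assms(1) assms(3) kpos assms(4)])
qed

end
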